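(* Let $p\in(0,1)$ be fixed and let $r\ge 3$. Let $k\ge r+1$ be the least integer satisfying $\frac{k!}{(k-r)!\,k^r}>p$. Then $$\frac{H_r(n,p)}{E(n,p)}\ge\left(\frac{(k-r+1)!\,k^{r-1}}{k!}\right)^{n-o(n)}$$ (as $n\to\infty$ over those $n$ for which $p\binom{n}{r}$ is an integer).
   Context: An $r$-graph $G$ has a vertex set and an edge set consisting of $r$-element subsets of the vertex set. An $n$-vertex $r$-graph has density $p$ if it has exactly $p\binom{n}{r}$ edges. A Hamiltonian cycle of an $n$-vertex $r$-graph $G$ is given by an ordering $v_1,\dots,v_n$ of its vertices such that for every $i$ the set $\{v_i,\dots,v_{i+r-1}\}$ (indices modulo $n$) is an edge; the cycle is identified with this set of $n$ edges. $H(G)$ is the number of Hamiltonian cycles of $G$. $H_r(n,p)$ is the maximum of $H(G)$ over all $n$-vertex $r$-graphs of density $p$. $E(n,p)=p^n(n-1)!/2$. *)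

theory Defs
  imports Complex_Main
begin

definition rgraph :: "nat \<Rightarrow> nat \<Rightarrow> nat set set \<Rightarrow> bool" where
  "rgraph n r E \<longleftrightarrow> (\<forall>e\<in>E. e \<subseteq> {..<n} \<and> card e = r)"

definition has_density :: "nat \<Rightarrow> nat \<Rightarrow> real \<Rightarrow> nat set set \<Rightarrow> bool" where
  "has_density n r p E \<longleftrightarrow> real (card E) = p * real (n choose r)"

definition window :: "nat \<Rightarrow> nat \<Rightarrow> (nat \<Rightarrow> nat) \<Rightarrow> nat \<Rightarrow> nat set" where
  "window n r v i = v ` {(i + j) mod n | j. j < r}"

text \<open>Hamiltonian cycles, identified with their sets of n edges.\<close>
definition ham_cycles :: "nat \<Rightarrow> nat \<Rightarrow> nat set set \<Rightarrow> nat set set set" where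
  "ham_cycles n r E = {C. \<exists>v. bij_betw v {..<n} {..<n} \<and> (\<forall>i<n. window n r v i \<in> E)
                          \<and> C = window n r v ` {..<n}}"

definition num_ham :: "nat \<Rightarrow> nat \<Rightarrow> nat set set \<Rightarrow> nat" where
  "num_ham n r E = card (ham_cycles n r E)"

definition H_max :: "nat \<Rightarrow> nat \<Rightarrow> real \<Rightarrow> nat" where
  "H_max r n p = Max {num_ham n r E | E. rgraph n r E \<and> has_density n r p E}"

definition E_exp :: "nat \<Rightarrow> real \<Rightarrow> real" where
  "E_exp n p = p ^ n * fact (n - 1) / 2"

end

theory Submission
  imports Defs "HOL-Combinatorics.Permutations" "HOL-Library.FuncSet"
begin


definition goodl :: "nat \<Rightarrow> nat list \<Rightarrow> bool" where
 "goodl r xs \<longleftrightarrow> (\<forall>a b. a < b \<and> b < a + r \<and> b < length xs \<longrightarrow> xs!a \<noteq> xs!b)"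

definition Lam :: "nat \<Rightarrow> nat \<Rightarrow> nat \<Rightarrow> nat list set" where
 "Lam r k L = {xs. set xs \<subseteq> {..<k} \<and> length xs = L \<and> goodl r xs}"

definition allowed :: "nat \<Rightarrow> nat \<Rightarrow> nat list \<Rightarrow> nat set" where
 "allowed r k xs = {..<k} - set (drop (length xs + 1 - r) xs)"

lemma finite_Lam: "finite (Lam r k L)"
proof -
  have "Lam r k L \<subseteq> {xs. set xs \<subseteq> {..<k} \<and> length xs = L}" by (auto simp: Lam_def)
  thus ?thesis using finite_lists_length_eq[of "{..<k}" L] finite_subset by blast
qed

lemma goodl_snoc:
  assumes "goodl r xs" "y \<notin> set (drop (length xs + 1 - r) xs)"
  shows "goodl r (xs @ [y])"
  unfolding goodl_def
proof (intro allI impI)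
  fix a b assume h: "a < b \<and> b < a + r \<and> b < length (xs @ [y])"
  show "(xs @ [y]) ! a \<noteq> (xs @ [y]) ! b"
  proof (cases "b < length xs")
    case True
    then show ?thesis using assms(1) h by (auto simp: goodl_def nth_append)
  next
    case False
    then have b: "b = length xs" using h by simp
    have "xs ! a \<in> set (drop (length xs + 1 - r) xs)"
    proof -
      have "a - (length xs + 1 - r) < length (drop (length xs + 1 - r) xs)" using h b by auto
      moreover have "drop (length xs + 1 - r) xs ! (a - (length xs + 1 - r)) = xs ! a"
        using h b by (subst nth_drop) auto
      ultimately show ?thesis by (metis nth_mem)
    qed
    then show ?thesis using assms(2) b h by (auto simp: nth_append)
  qed
qed

lemma card_allowed: "card (allowed r k xs) \<ge> k - (r - 1)"
proof -
  have "card (set (drop (length xs + 1 - r) xs)) \<le> r - 1"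
    using card_length[of "drop (length xs + 1 - r) xs"] by simp
  moreover have "card {..<k} - card (set (drop (length xs + 1 - r) xs)) \<le> card (allowed r k xs)"
    unfolding allowed_def by (rule diff_card_le_card_Diff) simp
  ultimately show ?thesis by simp
qed

lemma card_Lam: "card (Lam r k L) \<ge> (k - (r - 1)) ^ L"
proof (induction L)
  case 0
  have "Lam r k 0 = {[]}" by (auto simp: Lam_def goodl_def)
  then show ?case by simp
next
  case (Suc L)
  let ?S = "SIGMA xs:Lam r k L. allowed r k xs"
  have inj: "inj_on (\<lambda>(xs, y). xs @ [y]) ?S"
    by (auto simp: inj_on_def Lam_def)
  have sub: "(\<lambda>(xs, y). xs @ [y]) ` ?S \<subseteq> Lam r k (Suc L)"
    by (auto simp: Lam_def allowed_def intro: goodl_snoc)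
  have fin: "finite ?S" using finite_Lam by (auto simp: allowed_def)
  have "card ?S = (\<Sum>xs\<in>Lam r k L. card (allowed r k xs))"
    using finite_Lam by (simp add: card_SigmaI allowed_def)
  also have "\<dots> \<ge> (\<Sum>xs\<in>Lam r k L. k - (r - 1))"
    by (rule sum_mono) (rule card_allowed)
  finally have "card ?S \<ge> card (Lam r k L) * (k - (r - 1))" by simp
  moreover have "card ?S \<le> card (Lam r k (Suc L))"
    using card_inj_on_le[OF inj sub finite_Lam] .
  ultimately have "card (Lam r k (Suc L)) \<ge> card (Lam r k L) * (k - (r - 1))" by simp
  moreover have "card (Lam r k L) * (k - (r - 1)) \<ge> (k - (r - 1)) ^ L * (k - (r - 1))"
    using Suc.IH by simp
  ultimately show ?case by (metis le_trans mult.commute power_Suc)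
qed


definition pos :: "nat \<Rightarrow> nat \<Rightarrow> nat \<Rightarrow> nat set" where
  "pos n r j = {(j + t) mod n | t. t < r}"

lemma window_pos: "window n r v j = v ` pos n r j"
  by (simp add: window_def pos_def)

lemma mod_lt2: "(j::nat) < n \<Longrightarrow> t < n \<Longrightarrow> (j + t) mod n = (if j + t < n then j + t else j + t - n)"
proof (cases "j + t < n")
  case True then show ?thesis by simp
next
  case False
  assume "j < n" "t < n"
  then have "j + t - n < n" by simp
  then show ?thesis using False le_mod_geq[of n "j+t"] by simp
qed

lemma pos_nowrap: "j + r \<le> n \<Longrightarrow> pos n r j = {j..<j+r}"
  unfolding pos_def
proof (intro set_eqI iffI)
  fix x assume "j + r \<le> n" "x \<in> {(j + t) mod n |t. t < r}"
  then show "x \<in> {j..<j + r}" by auto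
next
  fix x assume a: "j + r \<le> n" "x \<in> {j..<j + r}"
  then have "x = (j + (x - j)) mod n \<and> x - j < r" by auto
  then show "x \<in> {(j + t) mod n |t. t < r}" by blast
qed

lemma pos_subset: "n > 0 \<Longrightarrow> pos n r j \<subseteq> {..<n}"
  by (auto simp: pos_def)

lemma card_pos: "r \<le> n \<Longrightarrow> j < n \<Longrightarrow> card (pos n r j) = r"
proof -
  assume rn: "r \<le> n" and jn: "j < n"
  have "pos n r j = (\<lambda>t. (j + t) mod n) ` {..<r}" by (auto simp: pos_def)
  moreover have "inj_on (\<lambda>t. (j + t) mod n) {..<r}"
  proof (rule inj_onI)
    fix x y assume "x \<in> {..<r}" "y \<in> {..<r}" "(j + x) mod n = (j + y) mod n"
    then show "x = y" using \<open>x \<in> {..<r}\<close> \<open>y \<in> {..<r}\<close> rn jn mod_lt2[of j n x] mod_lt2[of j n y]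
      by (auto split: if_splits)
  qed
  ultimately show ?thesis by (simp add: card_image)
qed

lemma core:
  fixes a s n j t1 t2 z :: nat
  assumes "t1 \<le> s" "t2 \<le> s" "j < n" "1 \<le> a" "a + s < n" "1 \<le> s" "z + 1 = a + s"
    and d1: "j + t1 = a \<or> j + t1 = a + n" and d2: "j + t2 = z \<or> j + t2 = z + n"
    and d3: "\<And>y. y + 1 = j \<Longrightarrow> a \<le> y \<Longrightarrow> y < a + s \<Longrightarrow> (\<exists>t3 \<le> s. j + t3 = y \<or> j + t3 = y + n)"
  shows "j + 1 = a \<or> j = a"
proof (cases "j = 0")
  case True
  then show ?thesis using assms by linarith
next
  case False
  then obtain y where y: "y + 1 = j" by (metis Suc_eq_plus1 not0_implies_Suc)
  show ?thesis
  proof (cases "a \<le> y \<and> y < a + s")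
    case True
    then obtain t3 where "t3 \<le> s" "j + t3 = y \<or> j + t3 = y + n" using d3 y by blast
    then show ?thesis using assms y by linarith
  next
    case F: False
    from d1 d2 show ?thesis
    proof (elim disjE)
      assume "j + t1 = a" "j + t2 = z" then show ?thesis using assms y F by linarith
    next
      assume "j + t1 = a" "j + t2 = z + n" then show ?thesis using assms y F by linarith
    next
      assume "j + t1 = a + n" "j + t2 = z" then show ?thesis using assms y F by linarith
    next
      assume "j + t1 = a + n" "j + t2 = z + n" then show ?thesis using assms y F by linarith
    qed
  qed
qed

lemma pos_sub:
  assumes "1 \<le> a" "a + s < n" "1 \<le> s" "j < n" "{a..<a+s} \<subseteq> pos n (Suc s) j"
  shows "j + 1 = a \<or> j = a"
proof -
  have mem: "\<exists>t \<le> s. j + t = x \<or> j + t = x + n" if "x \<in> {a..<a+s}" for x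
  proof -
    have "x \<in> pos n (Suc s) j" using assms(5) that by blast
    then obtain t where t: "t < Suc s" "x = (j + t) mod n" unfolding pos_def by blast
    have tn: "t < n" using t(1) assms(2) by linarith
    have "x = (if j + t < n then j + t else j + t - n)" using mod_lt2[OF assms(4) tn] t(2) by simp
    then have "j + t = x \<or> j + t = x + n" by (cases "j + t < n") simp_all
    then show ?thesis using t(1) by (intro exI[of _ t]) simp
  qed
  define z where "z = a + s - 1"
  have z: "z + 1 = a + s" using assms(3) by (simp add: z_def)
  have am: "a \<in> {a..<a+s}" using assms(3) by simp
  have zm: "z \<in> {a..<a+s}" using z assms(3) by simp
  obtain t1 where t1: "t1 \<le> s" "j + t1 = a \<or> j + t1 = a + n" using mem[OF am] by blast
  obtain t2 where t2: "t2 \<le> s" "j + t2 = z \<or> j + t2 = z + n" using mem[OF zm] by blast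
  have m3: "\<exists>t3 \<le> s. j + t3 = y \<or> j + t3 = y + n" if "y + 1 = j" "a \<le> y" "y < a + s" for y
  proof -
    have "y \<in> {a..<a+s}" using that by simp
    then show ?thesis by (rule mem)
  qed
  show ?thesis
    by (rule core[OF t1(1) t2(1) assms(4,1,2,3) z t1(2) t2(2) m3])
qed

lemma recon:
  assumes v: "v permutes {..<n-1}" and w: "w permutes {..<n-1}"
    and C: "window n r v ` {..<n} = window n r w ` {..<n}"
    and init: "\<forall>j<r. v j = w j" and r: "2 \<le> r" "r < n"
  shows "v = w"
proof -
  have vi: "inj v" using v by (rule permutes_inj)
  have wi: "inj w" using w by (rule permutes_inj)
  have agree: "\<forall>j<i. v j = w j" if "i \<le> n" for i
    using that
  proof (induction i)
    case 0 then show ?case by simp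
  next
    case (Suc i)
    then have IH: "\<forall>j<i. v j = w j" by simp
    have "v i = w i"
    proof (cases "i < r")
      case True then show ?thesis using init by simp
    next
      case False
      then have ri: "r \<le> i" by simp
      have iN: "i < n" using Suc.prems by simp
      define Q where "Q = {i+1-r..<i}"
      define S where "S = v ` Q"
      have Sw: "S = w ` Q" unfolding S_def Q_def using IH by (auto intro!: image_cong)
      have p1: "pos n r (i - r) = insert (i - r) Q"
        using ri iN r by (subst pos_nowrap) (auto simp: Q_def)
      have p2: "pos n r (i + 1 - r) = insert i Q"
        using ri iN r by (subst pos_nowrap) (auto simp: Q_def)
      have edges: "{e \<in> window n r u ` {..<n}. u ` Q \<subseteq> e} = {insert (u (i - r)) (u ` Q), insert (u i) (u ` Q)}"
        if u: "inj u" for u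
      proof (intro set_eqI iffI)
        fix e assume "e \<in> {e \<in> window n r u ` {..<n}. u ` Q \<subseteq> e}"
        then obtain j where j: "j < n" "e = u ` pos n r j" "u ` Q \<subseteq> u ` pos n r j"
          by (auto simp: window_pos)
        then have "Q \<subseteq> pos n r j" using u by (simp add: inj_image_subset_iff)
        moreover have "Suc (r - 1) = r" "i + 1 - r + (r - 1) = i" using r ri by auto
        ultimately have "j + 1 = i + 1 - r \<or> j = i + 1 - r"
          using pos_sub[of "i + 1 - r" "r - 1" n j] ri iN r j unfolding Q_def by auto
        then have "j = i - r \<or> j = i + 1 - r" using r ri by auto
        then show "e \<in> {insert (u (i - r)) (u ` Q), insert (u i) (u ` Q)}"
          using j p1 p2 by auto
      next
        fix e assume e: "e \<in> {insert (u (i - r)) (u ` Q), insert (u i) (u ` Q)}"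
        have "i - r < n" "i + 1 - r < n" using iN ri r by auto
        then have "window n r u (i - r) \<in> window n r u ` {..<n}" "window n r u (i + 1 - r) \<in> window n r u ` {..<n}"
          by auto
        moreover have "window n r u (i - r) = insert (u (i - r)) (u ` Q)"
          "window n r u (i + 1 - r) = insert (u i) (u ` Q)"
          using p1 p2 by (simp_all add: window_pos)
        ultimately show "e \<in> {e \<in> window n r u ` {..<n}. u ` Q \<subseteq> e}"
          using e by auto
      qed
      have vw: "v (i - r) = w (i - r)" using IH ri r by auto
      have "{insert (v (i - r)) S, insert (v i) S} = {e \<in> window n r v ` {..<n}. S \<subseteq> e}"
        using edges[OF vi] unfolding S_def by simp
      also have "\<dots> = {e \<in> window n r w ` {..<n}. w ` Q \<subseteq> e}" using C Sw by simp
      also have "\<dots> = {insert (w (i - r)) (w ` Q), insert (w i) (w ` Q)}" using edges[OF wi] .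
      finally have eq: "{insert (v (i - r)) S, insert (v i) S} = {insert (v (i - r)) S, insert (w i) S}"
        using vw Sw by simp
      have "v i \<notin> S" unfolding S_def Q_def using vi by (auto simp: inj_eq)
      moreover have "v i \<noteq> v (i - r)" using vi ri r by (auto simp: inj_eq)
      moreover have "w i \<notin> S" unfolding Sw Q_def using wi by (auto simp: inj_eq)
      ultimately have "insert (v i) S = insert (w i) S" using eq by (auto simp: doubleton_eq_iff)
      then show ?thesis using \<open>v i \<notin> S\<close> \<open>w i \<notin> S\<close> by blast
    qed
    then show ?case using IH less_Suc_eq by auto
  qed
  have "v x = w x" for x
  proof (cases "x < n")
    case True then show ?thesis using agree[of n] by simp
  next
    case False
    then have "x \<notin> {..<n-1}" by simp
    then show ?thesis using permutes_not_in[OF v] permutes_not_in[OF w] by metis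
  qed
  then show ?thesis by (intro ext)
qed


definition Kf :: "nat \<Rightarrow> nat \<Rightarrow> (nat \<Rightarrow> nat) \<Rightarrow> nat set set" where
 "Kf n r f = {e. e \<subseteq> {..<n} \<and> card e = r \<and> (n - 1 \<in> e \<or> inj_on f e)}"

lemma perm_n:
  fixes n :: nat assumes "v permutes {..<n-1}" shows "v permutes {..<n}"
  by (rule permutes_subset[OF assms]) auto

lemma window_sub:
  assumes "v permutes {..<n-1}" "0 < n" shows "window n r v i \<subseteq> {..<n}"
proof -
  have "pos n r i \<subseteq> {..<n}" using pos_subset assms(2) by blast
  then have "v ` pos n r i \<subseteq> v ` {..<n}" by blast
  also have "\<dots> = {..<n}" using permutes_image[OF perm_n[OF assms(1)]] .
  finally show ?thesis by (simp add: window_pos)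
qed

lemma card_window:
  assumes "v permutes {..<n-1}" "r \<le> n" "i < n" shows "card (window n r v i) = r"
proof -
  have "inj_on v (pos n r i)" using permutes_inj_on[OF assms(1)] .
  then show ?thesis using card_pos[OF assms(2,3)] by (simp add: window_pos card_image)
qed

lemma windows_in_Kf:
  assumes v: "v permutes {..<n-1}" and g: "goodl r (map (f \<circ> v) [0..<n-1])"
    and rn: "r < n" and i: "i < n"
  shows "window n r v i \<in> Kf n r f"
proof -
  have n0: "0 < n" using rn by simp
  have vlast: "v (n - 1) = n - 1" using permutes_not_in[OF v] by simp
  have "n - 1 \<in> window n r v i \<or> inj_on f (window n r v i)"
  proof (cases "n - 1 \<in> pos n r i")
    case True
    then show ?thesis using vlast by (auto simp: window_pos intro!: image_eqI[of _ _ "n - 1"])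
  next
    case False
    have ir: "i + r \<le> n - 1"
    proof (rule ccontr)
      assume "\<not> i + r \<le> n - 1"
      then have "n - 1 - i < r" "(i + (n - 1 - i)) mod n = n - 1" using i by auto
      then have "n - 1 \<in> pos n r i" unfolding pos_def by (intro CollectI exI[of _ "n - 1 - i"]) simp
      then show False using False by simp
    qed
    then have P: "pos n r i = {i..<i+r}" using pos_nowrap[of i r n] by simp
    show ?thesis
    proof (rule disjI2, rule inj_onI)
      fix x y assume x: "x \<in> window n r v i" and y: "y \<in> window n r v i" and fxy: "f x = f y"
      obtain a where a: "a \<in> {i..<i+r}" "x = v a" using x P by (auto simp: window_pos)
      obtain b where b: "b \<in> {i..<i+r}" "y = v b" using y P by (auto simp: window_pos)
      have len: "length (map (f \<circ> v) [0..<n-1]) = n - 1" by simp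
      show "x = y"
      proof (rule ccontr)
        assume "x \<noteq> y"
        then have ab: "a \<noteq> b" using a b by auto
        have an: "a < n - 1" "b < n - 1" using a b ir by auto
        have nth: "map (f \<circ> v) [0..<n-1] ! a = f x" "map (f \<circ> v) [0..<n-1] ! b = f y"
          using an a(2) b(2) by simp_all
        show False
        proof (cases "a < b")
          case True
          moreover have "b < a + r" using a(1) b(1) by simp
          ultimately have "map (f \<circ> v) [0..<n-1] ! a \<noteq> map (f \<circ> v) [0..<n-1] ! b"
            using g an(2) len unfolding goodl_def by metis
          then show False using nth fxy by simp
        next
          case False
          then have "b < a" using ab by simp
          moreover have "a < b + r" using a(1) b(1) by simp
          ultimately have "map (f \<circ> v) [0..<n-1] ! b \<noteq> map (f \<circ> v) [0..<n-1] ! a"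
            using g an(1) len unfolding goodl_def by metis
          then show False using nth fxy by simp
        qed
      qed
    qed
  qed
  then show ?thesis unfolding Kf_def using window_sub[OF v] card_window[OF v _ i] rn by auto
qed

lemma ham_cycles_sub: "0 < n \<Longrightarrow> ham_cycles n r K \<subseteq> Pow (Pow {..<n})"
proof
  fix C assume n: "0 < n" and "C \<in> ham_cycles n r K"
  then obtain v where v: "bij_betw v {..<n} {..<n}" "C = window n r v ` {..<n}"
    by (auto simp: ham_cycles_def)
  have "window n r v i \<subseteq> {..<n}" for i
  proof -
    have "pos n r i \<subseteq> {..<n}" using pos_subset n by blast
    then have "v ` pos n r i \<subseteq> v ` {..<n}" by blast
    then show ?thesis using v(1) by (simp add: window_pos bij_betw_def)
  qed
  then show "C \<in> Pow (Pow {..<n})" using v by auto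
qed

lemma finite_ham: "0 < n \<Longrightarrow> finite (ham_cycles n r K)"
  using ham_cycles_sub finite_subset by (metis finite_Pow_iff finite_lessThan)

lemma mult_bound:
  assumes Vs: "Vs \<subseteq> {v. v permutes {..<n-1} \<and> (\<forall>i<n. window n r v i \<in> K)}"
    and r: "2 \<le> r" "r < n"
  shows "card Vs \<le> card (ham_cycles n r K) * n ^ r"
proof -
  let ?phi = "\<lambda>v. (window n r v ` {..<n}, map v [0..<r])"
  let ?T = "ham_cycles n r K \<times> {xs. set xs \<subseteq> {..<n} \<and> length xs = r}"
  have inj: "inj_on ?phi Vs"
  proof (rule inj_onI)
    fix v w assume "v \<in> Vs" "w \<in> Vs" "?phi v = ?phi w"
    then have h: "v permutes {..<n-1}" "w permutes {..<n-1}"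
      "window n r v ` {..<n} = window n r w ` {..<n}" "map v [0..<r] = map w [0..<r]"
      using Vs by auto
    have h2: "\<forall>j<r. v j = w j"
    proof (intro allI impI)
      fix j assume "j < r"
      then have "map v [0..<r] ! j = map w [0..<r] ! j" using h(4) by simp
      then show "v j = w j" using \<open>j < r\<close> by simp
    qed
    show "v = w" by (rule recon[OF h(1,2,3) h2 r])
  qed
  have sub: "?phi ` Vs \<subseteq> ?T"
  proof
    fix x assume "x \<in> ?phi ` Vs"
    then obtain v where v: "v \<in> Vs" "x = ?phi v" by blast
    have vp: "v permutes {..<n}" using v Vs perm_n by blast
    have w: "\<forall>i<n. window n r v i \<in> K" using v(1) Vs by blast
    have b: "bij_betw v {..<n} {..<n}" by (rule permutes_imp_bij[OF vp])
    have "window n r v ` {..<n} \<in> ham_cycles n r K"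
      unfolding ham_cycles_def mem_Collect_eq
    proof (rule exI[of _ v])
      show "bij_betw v {..<n} {..<n} \<and> (\<forall>i<n. window n r v i \<in> K) \<and> window n r v ` {..<n} = window n r v ` {..<n}"
        using b w by simp
    qed
    moreover have "set (map v [0..<r]) \<subseteq> {..<n}"
    proof -
      have "v j < n" if "j < r" for j using permutes_in_image[OF vp, of j] that r(2) by simp
      then show ?thesis by auto
    qed
    ultimately show "x \<in> ?T" using v by simp
  qed
  have fin: "finite ?T" using finite_ham[of n r K] r finite_lists_length_eq[of "{..<n}" r] by simp
  have "card Vs \<le> card ?T" using card_inj_on_le[OF inj sub fin] .
  also have "card ?T = card (ham_cycles n r K) * n ^ r"
    by (simp add: card_cartesian_product card_lists_length_eq)
  finally show ?thesis .
qed


lemma exists_ge_avg: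
  fixes g :: "'a \<Rightarrow> nat"
  assumes "finite A" "A \<noteq> {}"
  shows "\<exists>a\<in>A. card A * g a \<ge> sum g A"
proof (rule ccontr)
  assume H: "\<not> ?thesis"
  have lt: "card A * g a < sum g A" if "a \<in> A" for a
    using H that not_le by blast
  have "(\<Sum>a\<in>A. card A * g a) < (\<Sum>a\<in>A. sum g A)"
    by (rule sum_strict_mono[OF assms lt])
  moreover have "(\<Sum>a\<in>A. card A * g a) = card A * sum g A" by (simp add: sum_distrib_left)
  moreover have "(\<Sum>a\<in>A. sum g A) = card A * sum g A" by simp
  ultimately show False by simp
qed

lemma count_f_for_v:
  assumes v: "v permutes {..<m}" and L: "L \<subseteq> {xs. set xs \<subseteq> {..<k} \<and> length xs = m}"
  shows "card {f \<in> PiE {..<m} (\<lambda>_. {..<k}). map (f \<circ> v) [0..<m] \<in> L} = card L"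
proof -
  let ?F = "{f \<in> PiE {..<m} (\<lambda>_. {..<k}). map (f \<circ> v) [0..<m] \<in> L}"
  let ?phi = "\<lambda>f. map (f \<circ> v) [0..<m]"
  have vin: "v i < m \<longleftrightarrow> i < m" for i using permutes_in_image[OF v, of i] by simp
  have inj: "inj_on ?phi ?F"
  proof (rule inj_onI)
    fix f g assume f: "f \<in> ?F" and g: "g \<in> ?F" and e: "?phi f = ?phi g"
    have "f x = g x" if "x \<in> {..<m}" for x
    proof -
      have ix: "inv v x < m" using vin[of "inv v x"] permutes_inverses(1)[OF v, of x] that by simp
      have "?phi f ! inv v x = ?phi g ! inv v x" by (simp only: e)
      then have "f (v (inv v x)) = g (v (inv v x))" using ix by simp
      then show ?thesis using permutes_inverses(1)[OF v, of x] by simp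
    qed
    then show "f = g" using f g by (intro PiE_ext[of f "{..<m}" "\<lambda>_. {..<k}" g]) auto
  qed
  have img: "?phi ` ?F = L"
  proof (intro equalityI subsetI)
    fix xs assume "xs \<in> ?phi ` ?F" then show "xs \<in> L" by auto
  next
    fix xs assume xs: "xs \<in> L"
    then have xs': "set xs \<subseteq> {..<k}" "length xs = m" using L by auto
    define f where "f = restrict (\<lambda>x. xs ! inv v x) {..<m}"
    have ix: "inv v x < m" if "x < m" for x using vin[of "inv v x"] permutes_inverses(1)[OF v, of x] that by simp
    have fF: "f \<in> PiE {..<m} (\<lambda>_. {..<k})"
    proof -
      have "xs ! inv v x < k" if "x < m" for x
      proof -
        have "xs ! inv v x \<in> set xs" using ix[OF that] xs'(2) by simp
        then show ?thesis using xs'(1) by blast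
      qed
      then show ?thesis unfolding f_def by auto
    qed
    have "?phi f = xs"
    proof (rule nth_equalityI)
      show "length (?phi f) = length xs" using xs' by simp
      fix i assume "i < length (?phi f)"
      then have i: "i < m" by simp
      then have "v i < m" using vin by simp
      then show "?phi f ! i = xs ! i" using i unfolding f_def by (simp add: permutes_inverses(2)[OF v])
    qed
    then show "xs \<in> ?phi ` ?F" using fF xs by (intro image_eqI[of _ _ f]) auto
  qed
  show ?thesis using card_image[OF inj] img by simp
qed

lemma exists_good_f:
  assumes k: "0 < k" and L: "L \<subseteq> {xs. set xs \<subseteq> {..<k} \<and> length xs = m}"
  shows "\<exists>f \<in> PiE {..<m} (\<lambda>_. {..<k}). k ^ m * card {v. v permutes {..<m} \<and> map (f \<circ> v) [0..<m] \<in> L} \<ge> fact m * card L"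
proof -
  let ?F = "PiE {..<m} (\<lambda>_. {..<k})"
  let ?P = "{v. v permutes {..<m}}"
  have finF: "finite ?F" by (simp add: finite_PiE)
  have finP: "finite ?P" by (simp add: finite_permutations)
  have cF: "card ?F = k ^ m" by (simp add: card_PiE)
  have neF: "?F \<noteq> {}" using k by (simp add: PiE_eq_empty_iff lessThan_empty_iff)
  have "(\<Sum>f\<in>?F. card {v \<in> ?P. map (f \<circ> v) [0..<m] \<in> L}) = (\<Sum>f\<in>?F. \<Sum>v\<in>{v \<in> ?P. map (f \<circ> v) [0..<m] \<in> L}. 1)"
    by simp
  also have "\<dots> = (\<Sum>v\<in>?P. \<Sum>f\<in>{f \<in> ?F. map (f \<circ> v) [0..<m] \<in> L}. 1)"
    by (rule sum.swap_restrict[OF finF finP])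
  also have "\<dots> = (\<Sum>v\<in>?P. card L)"
    by (rule sum.cong[OF refl]) (use count_f_for_v L in simp)
  also have "\<dots> = fact m * card L" using card_permutations[of "{..<m}" m] by simp
  finally have S: "(\<Sum>f\<in>?F. card {v \<in> ?P. map (f \<circ> v) [0..<m] \<in> L}) = fact m * card L" .
  obtain f where f: "f \<in> ?F" "card ?F * card {v \<in> ?P. map (f \<circ> v) [0..<m] \<in> L} \<ge> fact m * card L"
    using exists_ge_avg[OF finF neF, of "\<lambda>f. card {v \<in> ?P. map (f \<circ> v) [0..<m] \<in> L}"] S by auto
  then show ?thesis using cF by auto
qed


definition esym :: "nat set \<Rightarrow> nat \<Rightarrow> (nat \<Rightarrow> real) \<Rightarrow> real" where
 "esym I r a = (\<Sum>T\<in>{T. T \<subseteq> I \<and> card T = r}. \<Prod>i\<in>T. a i)"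

lemma subsets_insert_split:
  assumes "finite I" "i \<notin> I"
  shows "{T. T \<subseteq> insert i I \<and> card T = Suc r} = {T. T \<subseteq> I \<and> card T = Suc r} \<union> insert i ` {T. T \<subseteq> I \<and> card T = r}"
proof (intro equalityI subsetI)
  fix T assume T: "T \<in> {T. T \<subseteq> insert i I \<and> card T = Suc r}"
  show "T \<in> {T. T \<subseteq> I \<and> card T = Suc r} \<union> insert i ` {T. T \<subseteq> I \<and> card T = r}"
  proof (cases "i \<in> T")
    case True
    have fT: "finite T" using T assms(1) finite_subset by auto
    have "T = insert i (T - {i})" using True by auto
    moreover have "T - {i} \<subseteq> I" "card (T - {i}) = r" using T True fT by auto
    ultimately show ?thesis by blast
  next
    case False
    then show ?thesis using T by auto
  qed
next
  fix T assume "T \<in> {T. T \<subseteq> I \<and> card T = Suc r} \<union> insert i ` {T. T \<subseteq> I \<and> card T = r}"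
  then show "T \<in> {T. T \<subseteq> insert i I \<and> card T = Suc r}"
  proof
    assume "T \<in> {T. T \<subseteq> I \<and> card T = Suc r}" then show ?thesis by auto
  next
    assume "T \<in> insert i ` {T. T \<subseteq> I \<and> card T = r}"
    then obtain U where U: "U \<subseteq> I" "card U = r" "T = insert i U" by auto
    have "finite U" using U(1) assms(1) finite_subset by auto
    moreover have "i \<notin> U" using U(1) assms(2) by auto
    ultimately show ?thesis using U by auto
  qed
qed

lemma esym_insert:
  assumes "finite I" "i \<notin> I"
  shows "esym (insert i I) (Suc r) a = a i * esym I r a + esym I (Suc r) a"
proof -
  have fin1: "finite {T. T \<subseteq> I \<and> card T = Suc r}" using assms(1) by simp
  have fin2: "finite {T. T \<subseteq> I \<and> card T = r}" using assms(1) by simp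
  have disj: "{T. T \<subseteq> I \<and> card T = Suc r} \<inter> insert i ` {T. T \<subseteq> I \<and> card T = r} = {}"
    using assms(2) by auto
  have inj: "inj_on (insert i) {T. T \<subseteq> I \<and> card T = r}"
    using assms(2) by (auto simp: inj_on_def)
  have "esym (insert i I) (Suc r) a = (\<Sum>T\<in>{T. T \<subseteq> I \<and> card T = Suc r}. \<Prod>i\<in>T. a i) + (\<Sum>T\<in>insert i ` {T. T \<subseteq> I \<and> card T = r}. \<Prod>i\<in>T. a i)"
    unfolding esym_def subsets_insert_split[OF assms]
    by (rule sum.union_disjoint[OF fin1 finite_imageI[OF fin2] disj])
  also have "(\<Sum>T\<in>insert i ` {T. T \<subseteq> I \<and> card T = r}. \<Prod>i\<in>T. a i) = (\<Sum>T\<in>{T. T \<subseteq> I \<and> card T = r}. \<Prod>j\<in>insert i T. a j)"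
    by (rule sum.reindex[OF inj, unfolded comp_def])
  also have "\<dots> = (\<Sum>T\<in>{T. T \<subseteq> I \<and> card T = r}. a i * (\<Prod>j\<in>T. a j))"
  proof (rule sum.cong[OF refl])
    fix T assume "T \<in> {T. T \<subseteq> I \<and> card T = r}"
    then have "finite T" "i \<notin> T" using assms finite_subset by auto
    then show "(\<Prod>j\<in>insert i T. a j) = a i * (\<Prod>j\<in>T. a j)" by simp
  qed
  also have "\<dots> = a i * esym I r a" unfolding esym_def by (simp add: sum_distrib_left)
  finally show ?thesis unfolding esym_def by simp
qed

lemma esym_nonneg: "(\<And>i. i \<in> I \<Longrightarrow> 0 \<le> a i) \<Longrightarrow> 0 \<le> esym I r a"
  unfolding esym_def by (intro sum_nonneg prod_nonneg) auto

lemma esym_cong: "(\<And>i. i \<in> I \<Longrightarrow> a i = b i) \<Longrightarrow> esym I r a = esym I r b"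
  unfolding esym_def by (intro sum.cong refl prod.cong) auto

lemma esym_const: "finite I \<Longrightarrow> esym I r (\<lambda>_. c) = real (card I choose r) * c ^ r"
  unfolding esym_def by (simp add: n_subsets)

lemma esym_two:
  assumes "finite J" "i \<notin> J" "j \<notin> J" "i \<noteq> j"
  shows "esym (insert i (insert j J)) (Suc (Suc r)) a = a i * a j * esym J r a + (a i + a j) * esym J (Suc r) a + esym J (Suc (Suc r)) a"
proof -
  have "esym (insert i (insert j J)) (Suc (Suc r)) a = a i * esym (insert j J) (Suc r) a + esym (insert j J) (Suc (Suc r)) a"
    using assms by (intro esym_insert) auto
  also have "\<dots> = a i * (a j * esym J r a + esym J (Suc r) a) + (a j * esym J (Suc r) a + esym J (Suc (Suc r)) a)"
    using assms by (simp add: esym_insert)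
  finally show ?thesis by (simp add: algebra_simps)
qed

lemma maclaurin:
  assumes fin: "finite I" and kI: "card I = k" and k: "0 < k" and r: "2 \<le> r"
    and nn: "\<And>i. i \<in> I \<Longrightarrow> 0 \<le> a i"
  shows "esym I r a \<le> real (k choose r) * (sum a I / k) ^ r"
proof -
  define S where "S = sum a I"
  define mu where "mu = S / k"
  obtain r' where r': "r = Suc (Suc r')" using r by (metis add_2_eq_Suc le_Suc_ex)
  have key: "\<And>b. card {i\<in>I. b i \<noteq> mu} = N \<Longrightarrow> (\<forall>i\<in>I. 0 \<le> b i) \<Longrightarrow> sum b I = S
     \<Longrightarrow> esym I r b \<le> real (k choose r) * mu ^ r" for N
  proof (induction N rule: less_induct)
    case (less N)
    fix b assume cN: "card {i\<in>I. b i \<noteq> mu} = N" and bn: "\<forall>i\<in>I. 0 \<le> b i" and bs: "sum b I = S"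
    show "esym I r b \<le> real (k choose r) * mu ^ r"
    proof (cases "{i\<in>I. b i \<noteq> mu} = {}")
      case True
      then have "esym I r b = esym I r (\<lambda>_. mu)" by (intro esym_cong) auto
      then show ?thesis using esym_const[OF fin] kI by simp
    next
      case False
      have smu: "sum (\<lambda>_. mu) I = S" using kI k by (simp add: mu_def)
      have "\<exists>i\<in>I. b i > mu"
      proof (rule ccontr)
        assume "\<not> ?thesis"
        then have le: "\<forall>i\<in>I. b i \<le> mu" by auto
        then obtain i0 where "i0 \<in> I" "b i0 < mu" using False by force
        then have "sum b I < sum (\<lambda>_. mu) I" using sum_strict_mono_ex1[OF fin le] by blast
        then show False using bs smu by simp
      qed
      then obtain i where i: "i \<in> I" "b i > mu" by blast
      have "\<exists>j\<in>I. b j < mu"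
      proof (rule ccontr)
        assume "\<not> ?thesis"
        then have le: "\<forall>j\<in>I. mu \<le> b j" by auto
        have "sum (\<lambda>_. mu) I < sum b I" using sum_strict_mono_ex1[OF fin le] i by blast
        then show False using bs smu by simp
      qed
      then obtain j where j: "j \<in> I" "b j < mu" by blast
      have ij: "i \<noteq> j" using i j by auto
      define J where "J = I - {i, j}"
      have IJ: "I = insert i (insert j J)" using i j by (auto simp: J_def)
      have fJ: "finite J" using fin by (simp add: J_def)
      have iJ: "i \<notin> J" "j \<notin> J" by (auto simp: J_def)
      define b' where "b' = b(i := mu, j := b i + b j - mu)"
      have b'i: "b' i = mu" and b'j: "b' j = b i + b j - mu" using ij by (auto simp: b'_def)
      have b'J: "b' x = b x" if "x \<in> J" for x
      proof -
        have "x \<noteq> i" "x \<noteq> j" using that by (simp_all add: J_def)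
        then show ?thesis unfolding b'_def fun_upd_apply by (simp only: if_False)
      qed
      have b'n: "\<forall>x\<in>I. 0 \<le> b' x"
      proof
        fix x assume "x \<in> I"
        show "0 \<le> b' x"
        proof (cases "x = i \<or> x = j")
          case True
          have "0 \<le> b j" using bn j(1) by blast
          then have "0 \<le> mu" using j(2) by linarith
          have "0 \<le> b i" using bn i(1) by blast
          then show ?thesis using True b'i b'j \<open>0 \<le> mu\<close> \<open>0 \<le> b j\<close> i(2) by auto
        next
          case False
          then show ?thesis using \<open>x \<in> I\<close> bn by (auto simp: b'_def)
        qed
      qed
      have sumJ: "sum b' J = sum b J" by (rule sum.cong) (auto simp: b'J)
      have b's: "sum b' I = S"
      proof -
        have "sum b' I = b' i + (b' j + sum b' J)" using IJ fJ iJ ij by simp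
        also have "\<dots> = b i + (b j + sum b J)" using b'i b'j sumJ by simp
        also have "\<dots> = sum b I" using IJ fJ iJ ij by simp
        finally show ?thesis using bs by simp
      qed
      have sub: "{x\<in>I. b' x \<noteq> mu} \<subset> {x\<in>I. b x \<noteq> mu}"
      proof
        show "{x\<in>I. b' x \<noteq> mu} \<subseteq> {x\<in>I. b x \<noteq> mu}"
        proof
          fix x assume x: "x \<in> {x\<in>I. b' x \<noteq> mu}"
          show "x \<in> {x\<in>I. b x \<noteq> mu}"
          proof (cases "x = j")
            case True then show ?thesis using x j by auto
          next
            case False
            then have "x \<noteq> i" using x b'i by auto
            then show ?thesis using x False by (auto simp: b'_def)
          qed
        qed
        show "{x\<in>I. b' x \<noteq> mu} \<noteq> {x\<in>I. b x \<noteq> mu}"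
        proof
          assume eq: "{x\<in>I. b' x \<noteq> mu} = {x\<in>I. b x \<noteq> mu}"
          have "i \<in> {x\<in>I. b x \<noteq> mu}" using i by simp
          then have "i \<in> {x\<in>I. b' x \<noteq> mu}" by (simp only: eq)
          then show False using b'i by simp
        qed
      qed
      have lessN: "card {x\<in>I. b' x \<noteq> mu} < N"
        using psubset_card_mono[OF _ sub] fin cN by simp
      have IH: "esym I r b' \<le> real (k choose r) * mu ^ r"
        using less.IH[OF lessN refl b'n b's] .
      have EJ: "\<And>s. esym J s b' = esym J s b" by (rule esym_cong) (simp add: b'J)
      have prod: "b i * b j \<le> b' i * b' j"
      proof -
        have "0 \<le> (b i - mu) * (mu - b j)" using i j by simp
        moreover have "b' i * b' j = mu * (b i + b j - mu)" using b'i b'j by simp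
        ultimately show ?thesis by (simp add: algebra_simps)
      qed
      have E0: "0 \<le> esym J r' b" using bn IJ by (intro esym_nonneg) auto
      have "esym I r b = b i * b j * esym J r' b + (b i + b j) * esym J (Suc r') b + esym J (Suc (Suc r')) b"
        unfolding IJ r' by (rule esym_two[OF fJ iJ ij])
      also have "\<dots> \<le> b' i * b' j * esym J r' b + (b' i + b' j) * esym J (Suc r') b + esym J (Suc (Suc r')) b"
        using prod E0 b'i b'j by (simp add: mult_right_mono)
      also have "\<dots> = esym I r b'"
        unfolding IJ r' by (subst esym_two[OF fJ iJ ij]) (simp add: EJ)
      finally show ?thesis using IH by simp
    qed
  qed
  show ?thesis using key[OF refl] nn S_def mu_def by auto
qed


lemma card_Kf:
  assumes f: "f \<in> PiE {..<n-1} (\<lambda>_. {..<k})" and k: "0 < k" and r: "2 \<le> r" and n: "1 \<le> n"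
  shows "real (card (Kf n r f)) \<le> real ((n-1) choose (r-1)) + real (k choose r) * (real (n-1) / k) ^ r"
proof -
  define A1 where "A1 = {e. e \<subseteq> {..<n} \<and> card e = r \<and> n - 1 \<in> e}"
  define A2 where "A2 = {e. e \<subseteq> {..<n-1} \<and> card e = r \<and> inj_on f e}"
  define B where "B i = {x\<in>{..<n-1}. f x = i}" for i
  define Ts where "Ts = {T. T \<subseteq> {..<k} \<and> card T = r}"
  have finB: "finite (B i)" for i by (simp add: B_def)
  have finPi: "finite (PiE T B)" if "T \<in> Ts" for T
  proof -
    have "finite T" using that by (auto simp: Ts_def intro: finite_subset)
    then show ?thesis using finB by (intro finite_PiE) auto
  qed
  have sub: "Kf n r f \<subseteq> A1 \<union> A2"
  proof
    fix e assume e: "e \<in> Kf n r f"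
    show "e \<in> A1 \<union> A2"
    proof (cases "n - 1 \<in> e")
      case True then show ?thesis using e by (simp add: Kf_def A1_def)
    next
      case False
      have "e \<subseteq> {..<n-1}"
      proof
        fix x assume "x \<in> e"
        then have "x < n" "x \<noteq> n - 1" using e False by (auto simp: Kf_def)
        then show "x \<in> {..<n-1}" by simp
      qed
      then show ?thesis using e False by (simp add: Kf_def A2_def)
    qed
  qed
  have fA1: "finite A1" unfolding A1_def by (rule finite_subset[of _ "Pow {..<n}"]) auto
  have fA2: "finite A2" unfolding A2_def by (rule finite_subset[of _ "Pow {..<n-1}"]) auto
  have c1: "card A1 \<le> (n-1) choose (r-1)"
  proof -
    have "A1 \<subseteq> insert (n-1) ` {T. T \<subseteq> {..<n-1} \<and> card T = r - 1}"
    proof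
      fix e assume e: "e \<in> A1"
      have fe: "finite e" using e finite_subset unfolding A1_def by blast
      have "e - {n-1} \<subseteq> {..<n-1}"
      proof
        fix x assume "x \<in> e - {n-1}"
        then have "x < n" "x \<noteq> n - 1" using e by (auto simp: A1_def)
        then show "x \<in> {..<n-1}" by simp
      qed
      moreover have "card (e - {n-1}) = r - 1" using e fe by (simp add: A1_def)
      moreover have "e = insert (n-1) (e - {n-1})" using e by (auto simp: A1_def)
      ultimately show "e \<in> insert (n-1) ` {T. T \<subseteq> {..<n-1} \<and> card T = r - 1}" by blast
    qed
    then have "card A1 \<le> card (insert (n-1) ` {T. T \<subseteq> {..<n-1} \<and> card T = r - 1})"
      by (intro card_mono) auto
    also have "\<dots> \<le> card {T. T \<subseteq> {..<n-1} \<and> card T = r - 1}" by (rule card_image_le) simp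
    also have "\<dots> = (n-1) choose (r-1)" by (simp add: n_subsets)
    finally show ?thesis .
  qed
  have c2: "card A2 \<le> (\<Sum>T\<in>Ts. \<Prod>i\<in>T. card (B i))"
  proof -
    have "A2 \<subseteq> (\<Union>T\<in>Ts. (\<lambda>g. g ` T) ` PiE T B)"
    proof
      fix e assume e: "e \<in> A2"
      have inj: "inj_on f e" and esub: "e \<subseteq> {..<n-1}" and ce: "card e = r" using e by (auto simp: A2_def)
      define T where "T = f ` e"
      have TK: "T \<subseteq> {..<k}"
      proof
        fix i assume "i \<in> T"
        then obtain x where x: "x \<in> e" "i = f x" by (auto simp: T_def)
        then have "x \<in> {..<n-1}" using esub by blast
        then show "i \<in> {..<k}" using f x(2) by (auto simp: PiE_iff)
      qed
      have cT: "card T = r" using inj ce by (simp add: T_def card_image)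
      define g where "g = restrict (inv_into e f) T"
      have gP: "g \<in> PiE T B"
      proof -
        have "inv_into e f i \<in> B i" if "i \<in> T" for i
        proof -
          have "inv_into e f i \<in> e" using that by (simp add: T_def inv_into_into)
          moreover have "f (inv_into e f i) = i" using that by (simp add: T_def f_inv_into_f)
          ultimately show ?thesis using esub by (auto simp: B_def)
        qed
        then show ?thesis by (simp add: g_def)
      qed
      have "g ` T = e"
      proof -
        have "g ` T = inv_into e f ` T" by (simp add: g_def)
        also have "\<dots> = e" unfolding T_def by (rule inv_into_image_cancel[OF inj]) simp
        finally show ?thesis .
      qed
      then show "e \<in> (\<Union>T\<in>Ts. (\<lambda>g. g ` T) ` PiE T B)" using gP TK cT by (auto simp: Ts_def)
    qed
    then have "card A2 \<le> card (\<Union>T\<in>Ts. (\<lambda>g. g ` T) ` PiE T B)"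
    proof (rule card_mono[rotated])
      have "finite Ts" by (simp add: Ts_def)
      then show "finite (\<Union>T\<in>Ts. (\<lambda>g. g ` T) ` PiE T B)" using finPi by auto
    qed
    also have "\<dots> \<le> (\<Sum>T\<in>Ts. card ((\<lambda>g. g ` T) ` PiE T B))" by (rule card_UN_le) (simp add: Ts_def)
    also have "\<dots> \<le> (\<Sum>T\<in>Ts. card (PiE T B))" by (intro sum_mono card_image_le finPi)
    also have "\<dots> = (\<Sum>T\<in>Ts. \<Prod>i\<in>T. card (B i))"
      by (intro sum.cong refl card_PiE) (auto simp: Ts_def intro: finite_subset)
    finally show ?thesis .
  qed
  have sumB: "(\<Sum>i\<in>{..<k}. real (card (B i))) = real (n - 1)"
  proof -
    have U: "{..<n-1} = (\<Union>i\<in>{..<k}. B i)"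
    proof (intro equalityI subsetI)
      fix x assume "x \<in> {..<n-1}"
      then have "f x \<in> {..<k}" using f by (auto simp: PiE_iff)
      then show "x \<in> (\<Union>i\<in>{..<k}. B i)" using \<open>x \<in> {..<n-1}\<close> by (auto simp: B_def)
    next
      fix x assume "x \<in> (\<Union>i\<in>{..<k}. B i)" then show "x \<in> {..<n-1}" by (auto simp: B_def)
    qed
    have "card {..<n-1} = (\<Sum>i\<in>{..<k}. card (B i))"
      unfolding U by (rule card_UN_disjoint) (auto simp: B_def)
    then show ?thesis by (simp flip: of_nat_sum)
  qed
  have "real (card (Kf n r f)) \<le> real (card A1) + real (card A2)"
  proof -
    have "card (Kf n r f) \<le> card (A1 \<union> A2)" using sub fA1 fA2 by (intro card_mono) auto
    also have "\<dots> \<le> card A1 + card A2" by (rule card_Un_le)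
    finally show ?thesis by simp
  qed
  also have "\<dots> \<le> real ((n-1) choose (r-1)) + esym {..<k} r (\<lambda>i. real (card (B i)))"
  proof -
    have "real (card A2) \<le> real (\<Sum>T\<in>Ts. \<Prod>i\<in>T. card (B i))" using c2 by linarith
    also have "\<dots> = esym {..<k} r (\<lambda>i. real (card (B i)))" by (simp add: esym_def Ts_def)
    finally show ?thesis using c1 by linarith
  qed
  also have "esym {..<k} r (\<lambda>i. real (card (B i))) \<le> real (k choose r) * (real (n-1) / k) ^ r"
    using maclaurin[of "{..<k}" k r "\<lambda>i. real (card (B i))"] k r sumB by simp
  finally show ?thesis by simp
qed


lemma ham_in_sub:
  assumes "C \<in> ham_cycles n r K" "C \<subseteq> E" shows "C \<in> ham_cycles n r E"
proof -
  obtain v where v: "bij_betw v {..<n} {..<n}" "\<forall>i<n. window n r v i \<in> K" "C = window n r v ` {..<n}"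
    using assms(1) unfolding ham_cycles_def by blast
  have "\<forall>i<n. window n r v i \<in> E" using v(3) assms(2) by blast
  then show ?thesis unfolding ham_cycles_def mem_Collect_eq
    by (intro exI[of _ v] conjI v(1) v(3))
qed

lemma ham_sub_edges:
  assumes "C \<in> ham_cycles n r E" shows "C \<subseteq> E"
proof -
  obtain v where v: "\<forall>i<n. window n r v i \<in> E" "C = window n r v ` {..<n}"
    using assms unfolding ham_cycles_def by blast
  then show ?thesis by blast
qed

lemma ham_card_le:
  assumes "C \<in> ham_cycles n r E" shows "card C \<le> n"
proof -
  obtain v where v: "C = window n r v ` {..<n}"
    using assms unfolding ham_cycles_def by blast
  then show ?thesis using card_image_le[of "{..<n}" "window n r v"] by simp
qed

lemma ham_mono:
  assumes "E1 \<subseteq> E2" shows "ham_cycles n r E1 \<subseteq> ham_cycles n r E2"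
proof
  fix C assume C: "C \<in> ham_cycles n r E1"
  have "C \<subseteq> E2" using ham_sub_edges[OF C] assms by blast
  then show "C \<in> ham_cycles n r E2" using ham_in_sub[OF C] by blast
qed

lemma ham_restrict:
  assumes "E \<subseteq> K" shows "ham_cycles n r E = {C \<in> ham_cycles n r K. C \<subseteq> E}"
proof (intro equalityI subsetI)
  fix C assume C: "C \<in> ham_cycles n r E"
  then have "C \<in> ham_cycles n r K" using ham_mono[OF assms] by blast
  then show "C \<in> {C \<in> ham_cycles n r K. C \<subseteq> E}" using ham_sub_edges[OF C] by blast
next
  fix C assume "C \<in> {C \<in> ham_cycles n r K. C \<subseteq> E}"
  then show "C \<in> ham_cycles n r E" using ham_in_sub by blast
qed

lemma count_supersets:
  assumes "finite K" "X \<subseteq> K" "card X \<le> m"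
  shows "card {E. E \<subseteq> K \<and> card E = m \<and> X \<subseteq> E} = (card K - card X) choose (m - card X)"
proof -
  have fX: "finite X" using assms finite_subset by blast
  let ?D = "{B. B \<subseteq> K - X \<and> card B = m - card X}"
  have inj: "inj_on (\<lambda>B. B \<union> X) ?D"
  proof (rule inj_onI)
    fix A B assume "A \<in> ?D" "B \<in> ?D" "A \<union> X = B \<union> X"
    then show "A = B" by blast
  qed
  have img: "(\<lambda>B. B \<union> X) ` ?D = {E. E \<subseteq> K \<and> card E = m \<and> X \<subseteq> E}"
  proof (intro equalityI subsetI)
    fix E assume "E \<in> (\<lambda>B. B \<union> X) ` ?D"
    then obtain B where B: "B \<subseteq> K - X" "card B = m - card X" "E = B \<union> X" by blast
    have "finite B" using B(1) assms(1) finite_subset by blast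
    moreover have "B \<inter> X = {}" using B(1) by blast
    ultimately have "card E = m" using B fX assms(3) by (simp add: card_Un_disjoint)
    then show "E \<in> {E. E \<subseteq> K \<and> card E = m \<and> X \<subseteq> E}" using B assms(2) by blast
  next
    fix E assume E: "E \<in> {E. E \<subseteq> K \<and> card E = m \<and> X \<subseteq> E}"
    have fE: "finite E" using E assms(1) finite_subset by blast
    have "E - X \<subseteq> K - X" using E by blast
    moreover have "card (E - X) = m - card X" using E fE fX by (simp add: card_Diff_subset)
    moreover have "E = (E - X) \<union> X" using E by blast
    ultimately show "E \<in> (\<lambda>B. B \<union> X) ` ?D" by blast
  qed
  have "card {E. E \<subseteq> K \<and> card E = m \<and> X \<subseteq> E} = card ?D" using card_image[OF inj] img by simp
  also have "\<dots> = card (K - X) choose (m - card X)" using assms(1) by (simp add: n_subsets)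
  also have "card (K - X) = card K - card X" using assms fX by (simp add: card_Diff_subset)
  finally show ?thesis .
qed

lemma binom_shift_mono:
  assumes "c \<le> n" "n \<le> m" "m \<le> N"
  shows "(N - n) choose (m - n) \<le> (N - c) choose (m - c)"
proof -
  have "(N - n) choose (m - n) = (N - n) choose (N - m)"
    using assms by (subst binomial_symmetric) (auto intro: arg_cong2[where f=binomial])
  also have "\<dots> \<le> (N - c) choose (N - m)" by (rule binomial_right_mono) (use assms in simp)
  also have "\<dots> = (N - c) choose (m - c)"
    using assms by (subst binomial_symmetric) (auto intro: arg_cong2[where f=binomial])
  finally show ?thesis .
qed

lemma avg_edges:
  assumes K: "finite K" and mK: "m \<le> card K" and nm: "n \<le> m" and n0: "0 < n"
  shows "\<exists>E. E \<subseteq> K \<and> card E = m \<and>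
     card (ham_cycles n r E) * (card K choose m) \<ge> card (ham_cycles n r K) * ((card K - n) choose (m - n))"
proof -
  let ?S = "{E. E \<subseteq> K \<and> card E = m}"
  let ?H = "ham_cycles n r K"
  have finS: "finite ?S" using K by simp
  have finH: "finite ?H" using finite_ham n0 by blast
  have cS: "card ?S = card K choose m" using K by (simp add: n_subsets)
  obtain T where "T \<subseteq> K" "card T = m" using obtain_subset_with_card_n[OF mK] by metis
  then have neS: "?S \<noteq> {}" by blast
  have "(\<Sum>E\<in>?S. card (ham_cycles n r E)) = (\<Sum>E\<in>?S. \<Sum>C\<in>{C\<in>?H. C \<subseteq> E}. 1)"
  proof (rule sum.cong[OF refl])
    fix E assume "E \<in> ?S"
    then have "E \<subseteq> K" by blast
    then show "card (ham_cycles n r E) = (\<Sum>C\<in>{C\<in>?H. C \<subseteq> E}. 1)"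
      using ham_restrict[of E K n r] by simp
  qed
  also have "\<dots> = (\<Sum>C\<in>?H. \<Sum>E\<in>{E\<in>?S. C \<subseteq> E}. 1)"
    by (rule sum.swap_restrict[OF finS finH])
  also have "\<dots> = (\<Sum>C\<in>?H. (card K - card C) choose (m - card C))"
  proof (rule sum.cong[OF refl])
    fix C assume C: "C \<in> ?H"
    have "C \<subseteq> K" using ham_sub_edges[OF C] .
    moreover have "card C \<le> m" using ham_card_le[OF C] nm by linarith
    ultimately have "card {E. E \<subseteq> K \<and> card E = m \<and> C \<subseteq> E} = (card K - card C) choose (m - card C)"
      by (rule count_supersets[OF K])
    moreover have "{E\<in>?S. C \<subseteq> E} = {E. E \<subseteq> K \<and> card E = m \<and> C \<subseteq> E}" by blast
    ultimately show "(\<Sum>E\<in>{E\<in>?S. C \<subseteq> E}. 1) = (card K - card C) choose (m - card C)" by simp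
  qed
  also have "\<dots> \<ge> (\<Sum>C\<in>?H. (card K - n) choose (m - n))"
  proof (rule sum_mono)
    fix C assume C: "C \<in> ?H"
    show "(card K - n) choose (m - n) \<le> (card K - card C) choose (m - card C)"
      by (rule binom_shift_mono[OF ham_card_le[OF C] nm mK])
  qed
  finally have sum: "(\<Sum>E\<in>?S. card (ham_cycles n r E)) \<ge> card ?H * ((card K - n) choose (m - n))" by simp
  obtain E where E: "E \<in> ?S" "card ?S * card (ham_cycles n r E) \<ge> (\<Sum>E\<in>?S. card (ham_cycles n r E))"
    using exists_ge_avg[OF finS neS, of "\<lambda>E. card (ham_cycles n r E)"] by blast
  show ?thesis
    using E sum cS by (intro exI[of _ E]) (auto simp: mult.commute)
qed

lemma binom_ratio:
  "n \<le> m \<Longrightarrow> m \<le> N \<Longrightarrow> ((real m - real n) / real N) ^ n * real (N choose m) \<le> real ((N - n) choose (m - n))"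
proof (induction n arbitrary: N m)
  case 0 then show ?case by simp
next
  case (Suc n)
  have m1: "1 \<le> m" "1 \<le> N" using Suc.prems by auto
  have IH: "((real (m-1) - real n) / real (N-1)) ^ n * real ((N-1) choose (m-1)) \<le> real ((N - 1 - n) choose (m - 1 - n))"
    using Suc.IH[of "m-1" "N-1"] Suc.prems by simp
  have abs: "real m * real (N choose m) = real N * real ((N-1) choose (m-1))"
  proof -
    have "Suc (m-1) * (N choose Suc (m-1)) = N * ((N - 1) choose (m-1))" by (rule binomial_absorption)
    then show ?thesis using m1 by (metis Suc_diff_1 le_add_diff_inverse2 le_numeral_extra(2) less_one not_less of_nat_mult plus_1_eq_Suc le_less_trans order.strict_iff_not zero_less_one)
  qed
  define x where "x = real m - real n - 1"
  have x0: "0 \<le> x" using Suc.prems by (simp add: x_def)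
  have xm: "x \<le> real m" by (simp add: x_def)
  have Npos: "0 < real N" using m1 by simp
  have eqx: "real (m - 1) - real n = x" using m1 by (simp add: x_def of_nat_diff)
  have "((real m - real (Suc n)) / real N) ^ Suc n * real (N choose m)
        = (x / real N) * (x / real N) ^ n * real (N choose m)"
  proof -
    have "real m - real (Suc n) = x" by (simp add: x_def)
    then show ?thesis by simp
  qed
  also have "\<dots> = (x / real m) * (x / real N) ^ n * real ((N-1) choose (m-1))"
  proof -
    have "real (N choose m) = real N * real ((N-1) choose (m-1)) / real m" using abs m1 by (simp add: field_simps)
    then show ?thesis using Npos m1 by (simp add: field_simps)
  qed
  also have "\<dots> \<le> 1 * (x / real N) ^ n * real ((N-1) choose (m-1))"
    using x0 xm m1 by (intro mult_right_mono) (auto simp: divide_le_eq_1)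
  also have "\<dots> \<le> (x / real (N - 1)) ^ n * real ((N-1) choose (m-1))"
  proof (cases "N = 1")
    case True
    then have "n = 0" using Suc.prems by simp
    then show ?thesis by simp
  next
    case False
    then have "0 < real (N - 1)" "real (N - 1) \<le> real N" using m1 by auto
    then have "x / real N \<le> x / real (N - 1)" using x0 by (intro divide_left_mono) auto
    moreover have "0 \<le> x / real N" using x0 Npos by simp
    ultimately have "(x / real N) ^ n \<le> (x / real (N - 1)) ^ n" by (rule power_mono)
    then show ?thesis by (simp add: mult_right_mono)
  qed
  also have "\<dots> \<le> real ((N - 1 - n) choose (m - 1 - n))" using IH eqx by simp
  also have "real ((N - 1 - n) choose (m - 1 - n)) = real ((N - Suc n) choose (m - Suc n))" by simp
  finally show ?case .
qed


lemma exists_graph: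
  assumes K: "finite K" "K \<subseteq> {e. e \<subseteq> {..<n} \<and> card e = r}" "0 < card K"
    and nm: "n \<le> m" "m \<le> n choose r" "0 < n"
  shows "\<exists>E. rgraph n r E \<and> card E = m \<and>
    real (card (ham_cycles n r K)) * (min 1 ((real m - real n) / real (card K))) ^ n \<le> real (num_ham n r E)"
proof -
  define mu where "mu = min 1 ((real m - real n) / real (card K))"
  have mu0: "0 \<le> mu" using nm K by (simp add: mu_def)
  have mu1: "mu \<le> 1" by (simp add: mu_def)
  let ?U = "{e. e \<subseteq> {..<n} \<and> card e = r}"
  have finU: "finite ?U" by (rule finite_subset[of _ "Pow {..<n}"]) auto
  have cU: "card ?U = n choose r" by (simp add: n_subsets)
  show ?thesis
  proof (cases "m \<le> card K")
    case True
    obtain E where E: "E \<subseteq> K" "card E = m"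
      "card (ham_cycles n r E) * (card K choose m) \<ge> card (ham_cycles n r K) * ((card K - n) choose (m - n))"
      using avg_edges[OF K(1) True nm(1,3)] by blast
    have br: "((real m - real n) / real (card K)) ^ n * real (card K choose m) \<le> real ((card K - n) choose (m - n))"
      by (rule binom_ratio[OF nm(1) True])
    have Cpos: "0 < real (card K choose m)" using True by simp
    have "real (card (ham_cycles n r K)) * ((real m - real n) / real (card K)) ^ n * real (card K choose m)
        \<le> real (card (ham_cycles n r K)) * real ((card K - n) choose (m - n))"
      using br by (simp add: mult.assoc mult_left_mono)
    also have "\<dots> \<le> real (card (ham_cycles n r E)) * real (card K choose m)"
      using E(3) by (metis of_nat_le_iff of_nat_mult)
    finally have "real (card (ham_cycles n r K)) * ((real m - real n) / real (card K)) ^ n \<le> real (card (ham_cycles n r E))"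
      using Cpos by (simp add: mult_le_cancel_right)
    moreover have "mu ^ n \<le> ((real m - real n) / real (card K)) ^ n"
      using mu0 by (intro power_mono) (auto simp: mu_def)
    then have "real (card (ham_cycles n r K)) * mu ^ n \<le> real (card (ham_cycles n r K)) * ((real m - real n) / real (card K)) ^ n"
      by (rule mult_left_mono) simp
    ultimately have "real (card (ham_cycles n r K)) * mu ^ n \<le> real (num_ham n r E)"
      unfolding num_ham_def by linarith
    moreover have "rgraph n r E" using E(1) K(2) by (auto simp: rgraph_def)
    ultimately show ?thesis using E(2) unfolding mu_def by blast
  next
    case False
    have KU: "K \<subseteq> ?U" using K(2) by blast
    have cd: "card (?U - K) = card ?U - card K" by (rule card_Diff_subset[OF K(1) KU])
    have "m - card K \<le> card (?U - K)" unfolding cd cU using nm(2) by linarith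
    then obtain T where T: "T \<subseteq> ?U - K" "card T = m - card K" "finite T"
      by (rule obtain_subset_with_card_n)
    define E where "E = K \<union> T"
    have dj: "K \<inter> T = {}" using T(1) by blast
    have cE: "card E = m" unfolding E_def using card_Un_disjoint[OF K(1) T(3) dj] T(2) False by simp
    have rE: "rgraph n r E" using T K by (auto simp: rgraph_def E_def)
    have "card (ham_cycles n r K) \<le> card (ham_cycles n r E)"
      using ham_mono[of K E n r] finite_ham[OF nm(3)] by (intro card_mono) (auto simp: E_def)
    then have "real (card (ham_cycles n r K)) * mu ^ n \<le> real (num_ham n r E)"
    proof -
      have "mu ^ n \<le> 1" using mu0 mu1 by (rule power_le_one)
      then have "real (card (ham_cycles n r K)) * mu ^ n \<le> real (card (ham_cycles n r K))"
        by (simp add: mult_left_le)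
      then show ?thesis unfolding num_ham_def using \<open>card (ham_cycles n r K) \<le> card (ham_cycles n r E)\<close> by linarith
    qed
    then show ?thesis using rE cE unfolding mu_def by blast
  qed
qed


lemma Hmax_ge:
  assumes "rgraph n r E" "has_density n r p E"
  shows "num_ham n r E \<le> H_max r n p"
proof -
  have "{E. rgraph n r E \<and> has_density n r p E} \<subseteq> Pow (Pow {..<n})"
    by (auto simp: rgraph_def)
  then have fin: "finite {E. rgraph n r E \<and> has_density n r p E}"
    by (rule finite_subset) simp
  have eq: "{num_ham n r E |E. rgraph n r E \<and> has_density n r p E} = num_ham n r ` {E. rgraph n r E \<and> has_density n r p E}"
    by blast
  show ?thesis unfolding H_max_def eq
    by (rule Max_ge) (use fin assms in auto)
qed

lemma main_bound:
  fixes p :: real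
  assumes r: "2 \<le> r" and rk: "r < k" and rn: "r + 2 \<le> n"
    and m: "real m = p * real (n choose r)" "n \<le> m" "m \<le> n choose r"
  shows "real (H_max r n p) \<ge> (fact (n-1) * real (k - r + 1) ^ (n-1) / (real k ^ (n-1) * real n ^ r))
      * (min 1 ((real m - real n) / (real ((n-1) choose (r-1)) + real (k choose r) * (real (n-1) / k) ^ r))) ^ n"
proof -
  define L where "L = Lam r k (n-1)"
  define N0 where "N0 = real ((n-1) choose (r-1)) + real (k choose r) * (real (n-1) / k) ^ r"
  have k0: "0 < k" using rk by simp
  have n0: "0 < n" "1 \<le> n" using rn by auto
  have cL: "card L \<ge> (k - r + 1) ^ (n-1)"
  proof -
    have "k - (r - 1) = k - r + 1" using r rk by simp
    then show ?thesis using card_Lam[of k r "n-1"] unfolding L_def by simp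
  qed
  have Lsub: "L \<subseteq> {xs. set xs \<subseteq> {..<k} \<and> length xs = n - 1}" by (auto simp: L_def Lam_def)
  obtain f where f: "f \<in> PiE {..<n-1} (\<lambda>_. {..<k})"
    "k ^ (n-1) * card {v. v permutes {..<n-1} \<and> map (f \<circ> v) [0..<n-1] \<in> L} \<ge> fact (n-1) * card L"
    using exists_good_f[OF k0 Lsub] by blast
  define Vs where "Vs = {v. v permutes {..<n-1} \<and> map (f \<circ> v) [0..<n-1] \<in> L}"
  define K where "K = Kf n r f"
  have rn': "r < n" using rn by simp
  have VsK: "Vs \<subseteq> {v. v permutes {..<n-1} \<and> (\<forall>i<n. window n r v i \<in> K)}"
  proof
    fix v assume "v \<in> Vs"
    then have v: "v permutes {..<n-1}" "goodl r (map (f \<circ> v) [0..<n-1])" by (auto simp: Vs_def L_def Lam_def)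
    show "v \<in> {v. v permutes {..<n-1} \<and> (\<forall>i<n. window n r v i \<in> K)}"
      using windows_in_Kf[OF v rn'] v(1) by (simp add: K_def)
  qed
  have mb: "card Vs \<le> card (ham_cycles n r K) * n ^ r" by (rule mult_bound[OF VsK r rn'])
  have Vpos: "0 < card Vs"
  proof -
    have "0 < (k - r + 1) ^ (n-1)" by simp
    then have "0 < card L" using cL by linarith
    then have "0 < fact (n-1) * card L" by simp
    then have "0 < k ^ (n-1) * card Vs" using f(2) unfolding Vs_def by linarith
    then show ?thesis by simp
  qed
  have Ksub: "K \<subseteq> {e. e \<subseteq> {..<n} \<and> card e = r}" by (auto simp: K_def Kf_def)
  have finK: "finite K" by (rule finite_subset[OF Ksub]) (rule finite_subset[of _ "Pow {..<n}"], auto)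
  have Kpos: "0 < card K"
  proof -
    obtain v where "v \<in> Vs" using Vpos by (metis card.empty less_irrefl ex_in_conv)
    then have "window n r v 0 \<in> K" using VsK n0 by blast
    then show ?thesis using finK card_gt_0_iff by blast
  qed
  obtain E where E: "rgraph n r E" "card E = m"
    "real (card (ham_cycles n r K)) * (min 1 ((real m - real n) / real (card K))) ^ n \<le> real (num_ham n r E)"
    using exists_graph[OF finK Ksub Kpos m(2,3) n0(1)] by blast
  have dens: "has_density n r p E" using E(2) m(1) by (simp add: has_density_def)
  have HE: "real (num_ham n r E) \<le> real (H_max r n p)" using Hmax_ge[OF E(1) dens] by simp
  have KN: "real (card K) \<le> N0" unfolding K_def N0_def by (rule card_Kf[OF f(1) k0 r n0(2)])
  have mu: "min 1 ((real m - real n) / N0) \<le> min 1 ((real m - real n) / real (card K))"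
  proof -
    have "(real m - real n) / N0 \<le> (real m - real n) / real (card K)"
      using KN Kpos m(2) by (intro divide_left_mono) auto
    then show ?thesis by simp
  qed
  have mu0: "0 \<le> min 1 ((real m - real n) / N0)"
  proof -
    have "0 < N0" using KN Kpos by linarith
    then show ?thesis using m(2) by simp
  qed
  have HK: "fact (n-1) * real (k - r + 1) ^ (n-1) / (real k ^ (n-1) * real n ^ r) \<le> real (card (ham_cycles n r K))"
  proof -
    have "(fact (n-1) :: nat) * (k - r + 1) ^ (n-1) \<le> fact (n-1) * card L"
      using cL by (rule mult_le_mono2)
    also have "\<dots> \<le> k ^ (n-1) * card Vs" using f(2) unfolding Vs_def .
    also have "\<dots> \<le> k ^ (n-1) * (card (ham_cycles n r K) * n ^ r)"
      using mb by (rule mult_le_mono2)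
    finally have "real ((fact (n-1) :: nat) * (k - r + 1) ^ (n-1)) \<le> real (k ^ (n-1) * (card (ham_cycles n r K) * n ^ r))"
      by (simp only: of_nat_le_iff)
    then have "fact (n-1) * real (k - r + 1) ^ (n-1) \<le> real k ^ (n-1) * real n ^ r * real (card (ham_cycles n r K))"
      by (simp add: algebra_simps)
    moreover have "0 < real k ^ (n-1) * real n ^ r" using k0 n0 by simp
    ultimately show ?thesis by (simp add: divide_le_eq mult.commute)
  qed
  have "(fact (n-1) * real (k - r + 1) ^ (n-1) / (real k ^ (n-1) * real n ^ r)) * (min 1 ((real m - real n) / N0)) ^ n
      \<le> real (card (ham_cycles n r K)) * (min 1 ((real m - real n) / real (card K))) ^ n"
    using HK mu mu0 by (intro mult_mono power_mono) auto
  also have "\<dots> \<le> real (H_max r n p)" using E(3) HE by linarith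
  finally show ?thesis unfolding N0_def .
qed


lemma binom_lower:
  assumes "r \<le> n" shows "(real n - real r) ^ r / fact r \<le> real (n choose r)"
proof -
  have "real (n choose r) = (\<Prod>i = 0..<r. real (n - i) / real (r - i))"
    by (rule binomial_altdef_of_nat[OF assms])
  also have "\<dots> \<ge> (\<Prod>i = 0..<r. (real n - real r) / real (r - i))"
  proof (rule prod_mono)
    fix i assume i: "i \<in> {0..<r}"
    then have "real n - real r \<le> real (n - i)" using assms by (simp add: of_nat_diff)
    moreover have "0 \<le> real n - real r" using assms by simp
    ultimately show "0 \<le> (real n - real r) / real (r - i) \<and> (real n - real r) / real (r - i) \<le> real (n - i) / real (r - i)"
      by (simp add: divide_right_mono)
  qed
  also have "(\<Prod>i = 0..<r. (real n - real r) / real (r - i)) = (real n - real r) ^ r / (\<Prod>i = 0..<r. real (r - i))"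
    by (simp add: prod_dividef)
  also have "(\<Prod>i = 0..<r. real (r - i)) = fact r"
    by (simp add: fact_prod_rev[of r] of_nat_prod)
  finally show ?thesis .
qed

lemma fact_le_pow_mult:
  assumes "s \<le> a" shows "(fact a :: nat) \<le> fact (a - s) * a ^ s"
proof -
  have d: "fact (a - s) dvd (fact a :: nat)" by (rule fact_dvd) simp
  have "fact a = fact (a - s) * (fact a div fact (a - s) :: nat)" using d by simp
  also have "\<dots> \<le> fact (a - s) * a ^ s" using fact_div_fact_le_pow[OF assms] by simp
  finally show ?thesis .
qed

lemma b_gt_aux:
  assumes r: "3 \<le> r" and k: "r + 1 \<le> k"
  shows "(fact k :: real) < fact (k - r + 1) * real k ^ (r - 1)"
proof -
  have k2: "fact k = real k * real (k - 1) * fact (k - 2)"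
  proof -
    define j where "j = k - 2"
    have kj: "k = Suc (Suc j)" using r k by (simp add: j_def)
    have "(fact (Suc (Suc j)) :: real) = real (Suc (Suc j)) * (real (Suc j) * fact j)" by simp
    moreover have "k - 1 = Suc j" "k - 2 = j" using kj by simp_all
    ultimately show ?thesis using kj by simp
  qed
  have f2: "(fact (k - 2) :: nat) \<le> fact (k - 2 - (r - 3)) * (k - 2) ^ (r - 3)"
    by (rule fact_le_pow_mult) (use r k in simp)
  have e: "k - 2 - (r - 3) = k - r + 1" using r k by simp
  have "(fact (k - 2) :: real) \<le> fact (k - r + 1) * real (k - 2) ^ (r - 3)"
    using f2 unfolding e by (metis of_nat_fact of_nat_le_iff of_nat_mult of_nat_power)
  also have "\<dots> \<le> fact (k - r + 1) * real k ^ (r - 3)"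
    by (intro mult_left_mono power_mono) auto
  finally have f3: "(fact (k - 2) :: real) \<le> fact (k - r + 1) * real k ^ (r - 3)" .
  have "fact k \<le> real k * real (k - 1) * (fact (k - r + 1) * real k ^ (r - 3))"
    unfolding k2 using f3 by (intro mult_left_mono) auto
  also have "\<dots> < real k * real k * (fact (k - r + 1) * real k ^ (r - 3))"
  proof -
    have "real (k - 1) < real k" using k by simp
    moreover have "0 < real k * (fact (k - r + 1) * real k ^ (r - 3))" using k by simp
    ultimately show ?thesis by (simp add: mult.assoc mult_strict_left_mono)
  qed
  also have "\<dots> = fact (k - r + 1) * real k ^ (r - 1)"
  proof -
    have "r - 1 = Suc (Suc (r - 3))" using r by simp
    then show ?thesis by (simp add: algebra_simps)
  qed
  finally show ?thesis .
qed

lemma q_eq: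
  assumes "r \<le> k"
  shows "fact k / (fact (k - r) * real k ^ r) = fact r * (real (k choose r) / real k ^ r)"
proof -
  have "fact r * fact (k - r) * real (k choose r) = fact k"
    using binomial_fact_lemma[OF assms] by (metis of_nat_fact of_nat_mult)
  then have F: "fact k = fact r * fact (k - r) * real (k choose r)" by simp
  have "fact (k - r) \<noteq> (0::real)" by simp
  then show ?thesis unfolding F by (simp add: field_simps)
qed

lemma b_eq:
  assumes "r \<le> k" "0 < k" "1 \<le> r"
  shows "fact (k - r + 1) * real k ^ (r - 1) / fact k = real (k - r + 1) / (real k * (fact k / (fact (k - r) * real k ^ r)))"
proof -
  have "fact (k - r + 1) = real (k - r + 1) * fact (k - r)" by simp
  moreover have "real k ^ r = real k * real k ^ (r - 1)" using assms(3) by (metis power_eq_if not_one_le_zero)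
  ultimately show ?thesis using assms by (simp add: field_simps)
qed


lemma lim_ln_n: "((\<lambda>n::nat. ln (real n) / real n) \<longlongrightarrow> 0) sequentially"
proof -
  show ?thesis
    by (rule filterlim_compose[OF ln_x_over_x_tendsto_0 filterlim_real_sequentially])
qed

lemma alg_eq:
  fixes F B K Pn Nr Bm Km X :: real
  assumes "F \<noteq> 0" "B \<noteq> 0" "K \<noteq> 0" "Pn \<noteq> 0" "Nr \<noteq> 0"
  shows "F * Bm / (Km * Nr) * X / (Pn * F / 2) = (2 * K / (B * Nr)) * (B * Bm * X / (K * Km * Pn))"
  using assms by (simp add: field_simps)

lemma M:
  fixes p :: real and r k :: nat and eps :: real
  assumes p: "0 < p" "p < 1" and r: "3 \<le> r" and k: "r + 1 \<le> k"
    and qp: "fact k / (fact (k - r) * real k ^ r) > p" and e: "0 < eps"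
  shows "eventually (\<lambda>n. p * real (n choose r) \<in> \<int> \<longrightarrow>
      (fact (k - r + 1) * real k ^ (r - 1) / fact k) powr ((1 - eps) * real n) \<le> real (H_max r n p) / E_exp n p) sequentially"
proof -
  define q where "q = fact k / (fact (k - r) * real k ^ r)"
  define b where "b = fact (k - r + 1) * real k ^ (r - 1) / fact k"
  define be where "be = real (k - r + 1)"
  define c1 where "c1 = real (k choose r) / real k ^ r"
  have rk: "r \<le> k" "0 < k" "1 \<le> r" using r k by auto
  have qc: "q = fact r * c1" unfolding q_def c1_def by (rule q_eq[OF rk(1)])
  have bq: "b = be / (real k * q)" unfolding b_def be_def q_def by (rule b_eq[OF rk])
  have b1: "1 < b"
  proof -
    have "(fact k :: real) < fact (k - r + 1) * real k ^ (r - 1)" by (rule b_gt_aux[OF r k])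
    then show ?thesis unfolding b_def by simp
  qed
  have c1pos: "0 < c1" using rk unfolding c1_def by simp
  have qpos: "0 < q" using qc c1pos by simp
  have bepos: "0 < be" "be \<le> real k" using rk by (auto simp: be_def)
  define l where "l n = (p * (1 - real r * (1 / real n)) ^ r / fact r - (1 / real n) ^ (r - 1)) / (1 / real n + c1)" for n :: nat
  define y where "y n = be * min 1 (l n) / (real k * p)" for n
  have lim_l: "l \<longlonglongrightarrow> p / q"
  proof -
    have "(\<lambda>n. (p * (1 - real r * (1 / real n)) ^ r / fact r - (1 / real n) ^ (r - 1)) / (1 / real n + c1))
        \<longlonglongrightarrow> (p * (1 - real r * 0) ^ r / fact r - 0 ^ (r - 1)) / (0 + c1)"
      by (intro tendsto_intros lim_1_over_n) (use c1pos in auto)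
    moreover have "(p * (1 - real r * 0) ^ r / fact r - 0 ^ (r - 1)) / (0 + c1) = p / q"
    proof -
      have z: "(0::real) ^ (r - 1) = 0" by (rule zero_power) (use r in simp)
      show ?thesis by (simp only: z) (simp add: qc)
    qed
    ultimately show ?thesis unfolding l_def by simp
  qed
  have pq: "p / q < 1" using qp qpos unfolding q_def[symmetric] by simp
  have lim_y: "y \<longlonglongrightarrow> b"
  proof -
    have "y \<longlonglongrightarrow> be * min 1 (p / q) / (real k * p)" unfolding y_def by (intro tendsto_intros lim_l) (use p rk in simp)
    moreover have "be * min 1 (p / q) / (real k * p) = b" using pq bq p qpos rk by (simp add: field_simps)
    ultimately show ?thesis by simp
  qed
  have ev1: "eventually (\<lambda>n. 0 < l n) sequentially"
    using order_tendstoD(1)[OF lim_l] p qpos by simp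
  have bl: "b powr (1 - eps / 2) < b"
  proof -
    have "b powr (1 - eps / 2) < b powr 1" using b1 e by (intro powr_less_mono) auto
    then show ?thesis using b1 by simp
  qed
  have ev2: "eventually (\<lambda>n. b powr (1 - eps / 2) < y n) sequentially"
    using order_tendstoD(1)[OF lim_y bl] .
  have lnb: "0 < ln b" using b1 by simp
  have ev3: "eventually (\<lambda>n. ln (real n) / real n < (eps / 2) * ln b / real r) sequentially"
    using order_tendstoD(2)[OF lim_ln_n] e lnb rk by simp
  have ev4: "eventually (\<lambda>n. 2 * r + 2 \<le> n) sequentially" by (rule eventually_ge_at_top)
  show ?thesis
  proof (rule eventually_mono[OF eventually_conj[OF ev1 eventually_conj[OF ev2 eventually_conj[OF ev3 ev4]]]])
    fix n assume Hn: "0 < l n \<and> b powr (1 - eps / 2) < y n \<and> ln (real n) / real n < (eps / 2) * ln b / real r \<and> 2 * r + 2 \<le> n"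
    then have ln0: "0 < l n" and yb: "b powr (1 - eps / 2) < y n"
      and lnn: "ln (real n) / real n < (eps / 2) * ln b / real r" and nbig: "2 * r + 2 \<le> n" by auto
    show "p * real (n choose r) \<in> \<int> \<longrightarrow> (fact (k - r + 1) * real k ^ (r - 1) / fact k) powr ((1 - eps) * real n) \<le> real (H_max r n p) / E_exp n p"
    proof
      assume "p * real (n choose r) \<in> \<int>"
      then obtain z :: int where z: "p * real (n choose r) = of_int z" by (elim Ints_cases) auto
      define m where "m = nat z"
      have z0: "0 \<le> z" using z p by (metis of_int_0_le_iff mult_nonneg_nonneg less_imp_le of_nat_0_le_iff)
      have mreal: "real m = p * real (n choose r)" using z z0 by (simp add: m_def)
      have mC: "m \<le> n choose r"
      proof -
        have "p * real (n choose r) \<le> 1 * real (n choose r)" using p by (intro mult_right_mono) auto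
        then have "real m \<le> real (n choose r)" using mreal by simp
        then show ?thesis by simp
      qed
      have npos: "0 < real n" "r \<le> n" "1 \<le> n" using nbig by auto
      define u where "u = p * (1 - real r * (1 / real n)) ^ r / fact r - (1 / real n) ^ (r - 1)"
      define w where "w = 1 / real n + c1"
      have wpos: "0 < w" unfolding w_def using c1pos npos(1) by (simp add: add_nonneg_pos)
      have lu: "l n = u / w" by (simp add: l_def u_def w_def)
      have upos: "0 < u" using ln0 lu wpos by (simp add: zero_less_divide_iff)
      have pw: "real n ^ r * (1 / real n) ^ (r - 1) = real n"
      proof -
        have "real n ^ r = real n * real n ^ (r - 1)" using rk by (metis power_eq_if not_one_le_zero)
        then show ?thesis using npos by (simp add: power_one_over)
      qed
      have key1: "real n ^ r * u \<le> real m - real n"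
      proof -
        have "real n ^ r * (1 - real r * (1 / real n)) ^ r = (real n - real r) ^ r"
          using npos by (simp add: power_mult_distrib[symmetric] field_simps)
        then have "real n ^ r * (p * (1 - real r * (1 / real n)) ^ r / fact r) = p * ((real n - real r) ^ r / fact r)"
          by (simp add: field_simps)
        also have "\<dots> \<le> p * real (n choose r)" using binom_lower[OF npos(2)] p by (intro mult_left_mono) auto
        finally show ?thesis unfolding u_def using pw mreal by (simp add: right_diff_distrib)
      qed
      have nm: "n \<le> m"
      proof -
        have "0 < real n ^ r * u" using upos npos by simp
        then show ?thesis using key1 by simp
      qed
      define N0 where "N0 = real ((n-1) choose (r-1)) + real (k choose r) * (real (n-1) / k) ^ r"
      have key2: "N0 \<le> real n ^ r * w"
      proof -
        have "(n-1) choose (r-1) \<le> (n-1) ^ (r-1)" by (rule binomial_le_pow) (use npos in simp)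
        then have "real ((n-1) choose (r-1)) \<le> real ((n-1) ^ (r-1))" by (simp only: of_nat_le_iff)
        also have "\<dots> \<le> real n ^ (r - 1)" by (simp add: power_mono)
        also have "\<dots> = real n ^ r * (1 / real n)"
        proof -
          have "real n ^ r = real n * real n ^ (r - 1)" using rk by (metis power_eq_if not_one_le_zero)
          then show ?thesis using npos by simp
        qed
        finally have A: "real ((n-1) choose (r-1)) \<le> real n ^ r * (1 / real n)" .
        have "(real (n-1) / k) ^ r \<le> (real n / k) ^ r" using rk by (intro power_mono divide_right_mono) auto
        then have "real (k choose r) * (real (n-1) / k) ^ r \<le> real (k choose r) * (real n / k) ^ r"
          by (intro mult_left_mono) auto
        also have "\<dots> = real n ^ r * c1" by (simp add: c1_def power_divide)
        finally show ?thesis using A unfolding N0_def w_def by (simp add: distrib_left)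
      qed
      have N0pos: "0 < N0"
      proof -
        have "0 < (n-1) choose (r-1)" using npos by simp
        then show ?thesis unfolding N0_def by (simp add: add_pos_nonneg)
      qed
      have mu: "l n \<le> (real m - real n) / N0"
      proof -
        have "l n = (real n ^ r * u) / (real n ^ r * w)" using lu npos by simp
        also have "\<dots> \<le> (real m - real n) / N0"
          by (rule frac_le) (use upos npos key1 N0pos key2 nm in auto)
        finally show ?thesis .
      qed
      define A where "A = fact (n-1) * be ^ (n-1) / (real k ^ (n-1) * real n ^ r)"
      have MB: "A * (min 1 ((real m - real n) / N0)) ^ n \<le> real (H_max r n p)"
        using main_bound[of r k n m p] r k nbig mreal nm mC unfolding A_def N0_def be_def by simp
      have "A * (min 1 (l n)) ^ n \<le> A * (min 1 ((real m - real n) / N0)) ^ n"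
      proof -
        have "0 \<le> A" unfolding A_def using bepos by simp
        moreover have "(min 1 (l n)) ^ n \<le> (min 1 ((real m - real n) / N0)) ^ n"
          using mu ln0 by (intro power_mono) auto
        ultimately show ?thesis by (rule mult_left_mono[rotated])
      qed
      with MB have H1: "A * (min 1 (l n)) ^ n \<le> real (H_max r n p)" by linarith
      have Epos: "0 < E_exp n p" using p by (simp add: E_exp_def)
      have eq: "A * (min 1 (l n)) ^ n / E_exp n p = (2 * real k / (be * real n ^ r)) * y n ^ n"
      proof -
        have e1: "be ^ n = be * be ^ (n-1)" "real k ^ n = real k * real k ^ (n-1)"
          using npos by (metis power_eq_if not_one_le_zero)+
        have yn: "y n ^ n = be ^ n * min 1 (l n) ^ n / (real k ^ n * p ^ n)"
          by (simp add: y_def power_divide power_mult_distrib)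
        have nz: "(fact (n-1) :: real) \<noteq> 0" "be \<noteq> 0" "real k \<noteq> 0" "p ^ n \<noteq> 0" "real n ^ r \<noteq> 0"
          using bepos npos p rk by auto
        show ?thesis unfolding A_def E_exp_def yn e1
          by (rule alg_eq[OF nz])
      qed
      have bp: "0 < b powr (1 - eps / 2)" using b1 by simp
      have ypos: "0 < y n" using yb bp by linarith
      have Y: "b powr ((1 - eps / 2) * real n) \<le> y n ^ n"
      proof -
        have "b powr ((1 - eps / 2) * real n) = (b powr (1 - eps / 2)) ^ n"
          using b1 by (simp add: powr_powr[symmetric] powr_realpow)
        also have "\<dots> \<le> y n ^ n" using yb bp by (intro power_mono) auto
        finally show ?thesis .
      qed
      have P: "b powr (- (eps / 2) * real n) \<le> 2 * real k / (be * real n ^ r)"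
      proof -
        have "real r * ln (real n) < (eps / 2) * ln b * real n"
          using lnn npos rk by (simp add: field_simps)
        then have "- (eps / 2) * real n * ln b \<le> - (real r * ln (real n))" by (simp add: algebra_simps)
        then have "exp (- (eps / 2) * real n * ln b) \<le> exp (- (real r * ln (real n)))" by simp
        also have "exp (- (real r * ln (real n))) = 1 / real n ^ r"
          using npos by (simp add: exp_minus ln_realpow[symmetric] exp_ln inverse_eq_divide)
        also have "\<dots> \<le> 2 * real k / (be * real n ^ r)"
          using bepos npos by (simp add: field_simps)
        finally show ?thesis using b1 by (simp add: powr_def)
      qed
      have "b powr ((1 - eps) * real n) = b powr (- (eps / 2) * real n) * b powr ((1 - eps / 2) * real n)"
        by (simp add: powr_add[symmetric] algebra_simps)
      also have "\<dots> \<le> (2 * real k / (be * real n ^ r)) * y n ^ n"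
        using P Y bepos by (intro mult_mono) auto
      also have "\<dots> = A * (min 1 (l n)) ^ n / E_exp n p" using eq by simp
      also have "\<dots> \<le> real (H_max r n p) / E_exp n p" using H1 Epos by (simp add: divide_right_mono)
      finally show "(fact (k - r + 1) * real k ^ (r - 1) / fact k) powr ((1 - eps) * real n) \<le> real (H_max r n p) / E_exp n p"
        unfolding b_def .
    qed
  qed
qed


theorem theorem3:
  fixes p :: real and r k :: nat
  assumes "0 < p" "p < 1" "r \<ge> 3"
    and "k \<ge> r + 1"
    and "fact k / (fact (k - r) * real k ^ r) > p"
    and "\<forall>j. r + 1 \<le> j \<and> j < k \<longrightarrow> \<not> (fact j / (fact (j - r) * real j ^ r) > p)"
  shows "\<exists>g :: nat \<Rightarrow> real. (\<lambda>n. g n / real n) \<longlonglongrightarrow> 0 \<and>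
           (\<forall>\<^sub>F n in sequentially. p * real (n choose r) \<in> \<int> \<longrightarrow>
              real (H_max r n p) / E_exp n p
                \<ge> (fact (k - r + 1) * real k ^ (r - 1) / fact k) powr (real n - g n))"
proof -
  define b where "b = fact (k - r + 1) * real k ^ (r - 1) / fact k"
  define rho where "rho n = real (H_max r n p) / E_exp n p" for n
  define cond where "cond n \<longleftrightarrow> p * real (n choose r) \<in> \<int>" for n
  have b1: "1 < b"
  proof -
    have "(fact k :: real) < fact (k - r + 1) * real k ^ (r - 1)" by (rule b_gt_aux) (use assms in auto)
    then show ?thesis unfolding b_def by simp
  qed
  have Me: "eventually (\<lambda>n. cond n \<longrightarrow> b powr ((1 - e) * real n) \<le> rho n) sequentially" if "0 < e" for e
    using M[OF assms(1,2,3,4,5) that] unfolding b_def rho_def cond_def .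
  define g where "g n = (if cond n \<and> 0 < rho n then real n - min (real n) (log b (rho n)) else 0)" for n
  have h: "(0::real) < 1/2" by simp
  have part2: "eventually (\<lambda>n. cond n \<longrightarrow> b powr (real n - g n) \<le> rho n) sequentially"
  proof (rule eventually_mono[OF Me[OF h]])
    fix n assume H: "cond n \<longrightarrow> b powr ((1 - 1/2) * real n) \<le> rho n"
    show "cond n \<longrightarrow> b powr (real n - g n) \<le> rho n"
    proof
      assume c: "cond n"
      have bp: "0 < b powr ((1 - 1/2) * real n)" using b1 by simp
      have rpos: "0 < rho n" using H c bp by linarith
      have "real n - g n = min (real n) (log b (rho n))" using c rpos by (simp add: g_def)
      also have "\<dots> \<le> log b (rho n)" by simp
      finally have "b powr (real n - g n) \<le> b powr (log b (rho n))" using b1 by (intro powr_mono) auto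
      also have "\<dots> = rho n" using b1 rpos by simp
      finally show "b powr (real n - g n) \<le> rho n" .
    qed
  qed
  have part1: "(\<lambda>n. g n / real n) \<longlonglongrightarrow> 0"
  proof (rule tendstoI)
    fix e :: real assume e: "0 < e"
    have e2: "0 < e / 2" using e by simp
    show "eventually (\<lambda>n. dist (g n / real n) 0 < e) sequentially"
    proof (rule eventually_mono[OF eventually_conj[OF Me[OF e2] eventually_ge_at_top[of 1]]])
      fix n :: nat assume H: "(cond n \<longrightarrow> b powr ((1 - e / 2) * real n) \<le> rho n) \<and> 1 \<le> n"
      have n1: "0 < real n" using H by simp
      have gb: "0 \<le> g n \<and> g n \<le> (e / 2) * real n"
      proof (cases "cond n \<and> 0 < rho n")
        case True
        have "b powr ((1 - e / 2) * real n) \<le> rho n" using H True by blast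
        then have "log b (b powr ((1 - e / 2) * real n)) \<le> log b (rho n)"
          using b1 True by (subst log_le_cancel_iff) auto
        then have L: "(1 - e / 2) * real n \<le> log b (rho n)" using b1 by simp
        have "g n = real n - min (real n) (log b (rho n))" using True by (simp add: g_def)
        moreover have "(1 - e / 2) * real n \<le> min (real n) (log b (rho n))"
          using L e n1 by (simp add: algebra_simps)
        moreover have "min (real n) (log b (rho n)) \<le> real n" by simp
        ultimately show ?thesis by (simp add: algebra_simps) linarith
      next
        case False
        then have "g n = 0" unfolding g_def by (rule if_not_P)
        then show ?thesis using e n1 by simp
      qed
      then have "\<bar>g n / real n\<bar> \<le> e / 2" using n1 by (simp add: abs_le_iff divide_le_eq)
      moreover have "dist (g n / real n) 0 = \<bar>g n / real n\<bar>" by (simp add: dist_real_def)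
      ultimately show "dist (g n / real n) 0 < e" using e by linarith
    qed
  qed
  show ?thesis
    using part1 part2 unfolding b_def rho_def cond_def by blast
qed


end
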